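(* Let $G=(V,E)$ be an undirected graph with terminals $s_1,s_2,s_3,s_4\in V$. Let $G'$ be the directed graph with vertex set $V\cup\{s,t\}$ ($s,t$ new) whose arcs are: $(u,v)$ and $(v,u)$ for every edge $uv\in E$, together with the arcs $(s,s_1),(s_1,s),(s_2,s),(s_2,t),(s,s_3),(t,s_3),(t,s_4),(s_4,t)$. Then for every $C\subseteq V\setminus\{s_1,s_2,s_3,s_4\}$: $G-C$ contains no path between $s_i$ and $s_j$ for any $i\neq j$ if and only if $G'-C$ contains no directed path from $s$ to $t$ and no directed path from $t$ to $s$. Consequently, with node weights on $V$ carried over to $G'$ (and terminals $s_1,\dots,s_4,s,t$ not removable), the optimum of 4-terminal node-weighted multiway cut in $G$ equals the optimum node-weighted $st$-bi-cut in $G'$, giving an approximation-preserving reduction from 4-terminal $\textsc{Node-wt-MC}$ to $st$-Bi-Cut.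
   Context: $G-C$ and $G'-C$ denote the graphs obtained by deleting the vertices in $C$. In node-weighted $st$-Bi-Cut, one removes a minimum-weight set of non-terminal vertices so that no directed path from $s$ to $t$ and none from $t$ to $s$ remains. In $\textsc{Node-wt-MC}$ (undirected), one removes a minimum-weight set of non-terminal vertices so that no two distinct terminals remain connected. *)

theory Defs
  imports Main "HOL-Library.Extended_Real"
begin

datatype 'a ext = Old 'a | NewS | NewT

definition restr :: "('v \<times> 'v) set \<Rightarrow> 'v set \<Rightarrow> ('v \<times> 'v) set" where
  "restr R X = {(x, y). (x, y) \<in> R \<and> x \<in> X \<and> y \<in> X}"

(* undirected graph G = (V,E): E is a set of (unordered, represented as ordered) edges;
   u and v are connected in G - C iff there is a path using edges in either direction,
   avoiding vertices of C *)
definition ucon :: "'a set \<Rightarrow> ('a \<times> 'a) set \<Rightarrow> 'a set \<Rightarrow> 'a \<Rightarrow> 'a \<Rightarrow> bool" where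
  "ucon V E C u v \<longleftrightarrow> u \<in> V - C \<and> v \<in> V - C \<and> (u, v) \<in> (restr (E \<union> E\<inverse>) (V - C))\<^sup>*"

definition dreach :: "'v set \<Rightarrow> ('v \<times> 'v) set \<Rightarrow> 'v set \<Rightarrow> 'v \<Rightarrow> 'v \<Rightarrow> bool" where
  "dreach W A C u v \<longleftrightarrow> u \<in> W - C \<and> v \<in> W - C \<and> (u, v) \<in> (restr A (W - C))\<^sup>*"

definition mwc_feasible :: "'a set \<Rightarrow> ('a \<times> 'a) set \<Rightarrow> 'a set \<Rightarrow> 'a set \<Rightarrow> bool" where
  "mwc_feasible V E T C \<longleftrightarrow> C \<subseteq> V - T \<and> (\<forall>x\<in>T. \<forall>y\<in>T. x \<noteq> y \<longrightarrow> \<not> ucon V E C x y)"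

(* feasible node-weighted st-bi-cut; X = non-removable (terminal) vertices *)
definition bicut_feasible :: "'v set \<Rightarrow> ('v \<times> 'v) set \<Rightarrow> 'v set \<Rightarrow> 'v \<Rightarrow> 'v \<Rightarrow> 'v set \<Rightarrow> bool" where
  "bicut_feasible W A X s t C \<longleftrightarrow> C \<subseteq> W - X \<and> \<not> dreach W A C s t \<and> \<not> dreach W A C t s"

(* optimum value (infimum over feasible sets; +infinity if none is feasible) *)
definition opt_val :: "('v \<Rightarrow> real) \<Rightarrow> ('v set \<Rightarrow> bool) \<Rightarrow> ereal" where
  "opt_val w F = Inf ((\<lambda>C. ereal (sum w C)) ` {C. F C})"

definition Gp_vertices :: "'a set \<Rightarrow> 'a ext set" where
  "Gp_vertices V = Old ` V \<union> {NewS, NewT}"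

definition Gp_arcs :: "('a \<times> 'a) set \<Rightarrow> 'a \<Rightarrow> 'a \<Rightarrow> 'a \<Rightarrow> 'a \<Rightarrow> ('a ext \<times> 'a ext) set" where
  "Gp_arcs E s1 s2 s3 s4 =
     {(Old u, Old v) | u v. (u, v) \<in> E} \<union> {(Old v, Old u) | u v. (u, v) \<in> E} \<union>
     {(NewS, Old s1), (Old s1, NewS), (Old s2, NewS), (Old s2, NewT),
      (NewS, Old s3), (NewT, Old s3), (NewT, Old s4), (Old s4, NewT)}"

(* node weights carried over to G' (weights of s,t irrelevant: they are not removable) *)
definition Gp_weight :: "('a \<Rightarrow> real) \<Rightarrow> 'a ext \<Rightarrow> real" where
  "Gp_weight w x = (case x of Old v \<Rightarrow> w v | _ \<Rightarrow> 0)"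

end

theory Submission
  imports Defs
begin

lemma rt_inv:
  assumes "(a,b) \<in> R\<^sup>*" "a \<in> S" "\<And>x y. (x,y) \<in> R \<Longrightarrow> x \<in> S \<Longrightarrow> y \<in> S"
  shows "b \<in> S"
  using assms(1,2) by (induction rule: rtrancl_induct) (auto intro: assms(3))

lemma restr_sym:
  assumes "(u,v) \<in> (restr (E \<union> E\<inverse>) X)\<^sup>*"
  shows "(v,u) \<in> (restr (E \<union> E\<inverse>) X)\<^sup>*"
proof -
  have e: "(restr (E \<union> E\<inverse>) X)\<inverse> = restr (E \<union> E\<inverse>) X" by (auto simp: restr_def)
  have "(v,u) \<in> ((restr (E \<union> E\<inverse>) X)\<inverse>)\<^sup>*" using assms by (rule rtrancl_converseI)
  thus ?thesis using e by simp
qed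

lemma lift:
  assumes "(u,v) \<in> (restr (E \<union> E\<inverse>) (V - C))\<^sup>*"
  shows "(Old u, Old v) \<in> (restr (Gp_arcs E s1 s2 s3 s4) (Gp_vertices V - Old ` C))\<^sup>*"
  using assms
proof (induction rule: rtrancl_induct)
  case base then show ?case by simp
next
  case (step y z)
  have "(Old y, Old z) \<in> restr (Gp_arcs E s1 s2 s3 s4) (Gp_vertices V - Old ` C)"
    using step(2) by (auto simp: restr_def Gp_arcs_def Gp_vertices_def)
  with step(3) show ?case by (rule rtrancl_into_rtrancl)
qed

lemma iff_part:
  assumes "E \<subseteq> V \<times> V"
    and "s1 \<in> V" "s2 \<in> V" "s3 \<in> V" "s4 \<in> V"
    and "distinct [s1, s2, s3, s4]"
    and C: "C \<subseteq> V - {s1, s2, s3, s4}"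
  shows "(\<forall>x\<in>{s1, s2, s3, s4}. \<forall>y\<in>{s1, s2, s3, s4}. x \<noteq> y \<longrightarrow> \<not> ucon V E C x y)
             \<longleftrightarrow> (\<not> dreach (Gp_vertices V) (Gp_arcs E s1 s2 s3 s4) (Old ` C) NewS NewT
                  \<and> \<not> dreach (Gp_vertices V) (Gp_arcs E s1 s2 s3 s4) (Old ` C) NewT NewS)"
proof -
  define R where "R = restr (E \<union> E\<inverse>) (V - C)"
  define A where "A = restr (Gp_arcs E s1 s2 s3 s4) (Gp_vertices V - Old ` C)"
  have tin: "s1 \<in> V - C" "s2 \<in> V - C" "s3 \<in> V - C" "s4 \<in> V - C" using assms by auto
  have ucon_iff: "\<And>x y. x \<in> V - C \<Longrightarrow> y \<in> V - C \<Longrightarrow> ucon V E C x y \<longleftrightarrow> (x,y) \<in> R\<^sup>*"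
    by (simp add: ucon_def R_def)
  have dr: "\<And>x y. x \<in> {NewS, NewT} \<Longrightarrow> y \<in> {NewS, NewT} \<Longrightarrow>
     dreach (Gp_vertices V) (Gp_arcs E s1 s2 s3 s4) (Old ` C) x y \<longleftrightarrow> (x,y) \<in> A\<^sup>*"
    by (auto simp: dreach_def A_def Gp_vertices_def)
  have arc: "\<And>x y. (x,y) \<in> Gp_arcs E s1 s2 s3 s4 \<Longrightarrow> x \<in> {NewS, NewT} \<union> Old ` {s1,s2,s3,s4}
     \<Longrightarrow> y \<in> {NewS, NewT} \<union> Old ` {s1,s2,s3,s4} \<Longrightarrow> (x,y) \<in> A"
    using tin by (auto simp: A_def restr_def Gp_vertices_def)
  have L: "\<And>u v. (u,v) \<in> R\<^sup>* \<Longrightarrow> (Old u, Old v) \<in> A\<^sup>*"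
    unfolding R_def A_def by (rule lift)
  have S: "\<And>u v. (u,v) \<in> R\<^sup>* \<Longrightarrow> (v,u) \<in> R\<^sup>*" unfolding R_def by (rule restr_sym)
  have path: "\<And>a x y b. (a, Old x) \<in> A \<Longrightarrow> (x,y) \<in> R\<^sup>* \<Longrightarrow> (Old y, b) \<in> A \<Longrightarrow> (a,b) \<in> A\<^sup>*"
    by (meson L converse_rtrancl_into_rtrancl rtrancl_into_rtrancl)
  have ar: "(NewS, Old s1) \<in> A" "(Old s1, NewS) \<in> A" "(Old s2, NewS) \<in> A" "(Old s2, NewT) \<in> A"
     "(NewS, Old s3) \<in> A" "(NewT, Old s3) \<in> A" "(NewT, Old s4) \<in> A" "(Old s4, NewT) \<in> A"
    by (rule arc; simp add: Gp_arcs_def)+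
  show ?thesis
  proof
    assume H: "\<forall>x\<in>{s1, s2, s3, s4}. \<forall>y\<in>{s1, s2, s3, s4}. x \<noteq> y \<longrightarrow> \<not> ucon V E C x y"
    have N: "\<And>x y. x\<in>{s1, s2, s3, s4} \<Longrightarrow> y\<in>{s1, s2, s3, s4} \<Longrightarrow> x \<noteq> y \<Longrightarrow> (x,y) \<notin> R\<^sup>*"
      using H ucon_iff tin by blast
    have ext: "\<And>x u v. (x,u) \<in> R\<^sup>* \<Longrightarrow> (Old u, Old v) \<in> A \<Longrightarrow> (x,v) \<in> R\<^sup>*"
    proof -
      fix x u v assume a: "(x,u) \<in> R\<^sup>*" "(Old u, Old v) \<in> A"
      hence "(u,v) \<in> R" using assms(1)
        by (auto simp: A_def R_def restr_def Gp_arcs_def Gp_vertices_def)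
      thus "(x,v) \<in> R\<^sup>*" using a(1) by simp
    qed
    have dst: "\<And>u. (Old u, NewT) \<in> A \<Longrightarrow> u = s2 \<or> u = s4"
      by (auto simp: A_def restr_def Gp_arcs_def)
    have dss: "\<And>u. (Old u, NewS) \<in> A \<Longrightarrow> u = s1 \<or> u = s2"
      by (auto simp: A_def restr_def Gp_arcs_def)
    have fs: "\<And>y. (NewS, y) \<in> A \<Longrightarrow> y = Old s1 \<or> y = Old s3"
      by (auto simp: A_def restr_def Gp_arcs_def)
    have ft: "\<And>y. (NewT, y) \<in> A \<Longrightarrow> y = Old s3 \<or> y = Old s4"
      by (auto simp: A_def restr_def Gp_arcs_def)
    have nn: "\<And>y. (NewS, y) \<notin> A \<or> y \<noteq> NewT" "\<And>y. (NewT, y) \<notin> A \<or> y \<noteq> NewS"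
      using fs ft by auto
    have d: "distinct [s1,s2,s3,s4]" by fact
    have "(NewS, NewT) \<notin> A\<^sup>*"
    proof
      assume "(NewS, NewT) \<in> A\<^sup>*"
      hence "NewT \<in> {NewS} \<union> Old ` {v. (s1,v) \<in> R\<^sup>* \<or> (s3,v) \<in> R\<^sup>*}"
      proof (rule rt_inv)
        fix x y assume xy: "(x,y) \<in> A" and x: "x \<in> {NewS} \<union> Old ` {v. (s1,v) \<in> R\<^sup>* \<or> (s3,v) \<in> R\<^sup>*}"
        show "y \<in> {NewS} \<union> Old ` {v. (s1,v) \<in> R\<^sup>* \<or> (s3,v) \<in> R\<^sup>*}"
        proof (cases x)
          case NewS then show ?thesis using xy fs by auto
        next
          case NewT then show ?thesis using x by auto
        next
          case (Old u)
          with x have u: "(s1,u) \<in> R\<^sup>* \<or> (s3,u) \<in> R\<^sup>*" by auto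
          show ?thesis
          proof (cases y)
            case NewS then show ?thesis by simp
          next
            case NewT
            then have "u = s2 \<or> u = s4" using dst xy Old by simp
            then show ?thesis using u N d by auto
          next
            case (Old v) then show ?thesis using u ext xy \<open>x = Old u\<close> by blast
          qed
        qed
      qed simp
      thus False by auto
    qed
    moreover have "(NewT, NewS) \<notin> A\<^sup>*"
    proof
      assume "(NewT, NewS) \<in> A\<^sup>*"
      hence "NewS \<in> {NewT} \<union> Old ` {v. (s3,v) \<in> R\<^sup>* \<or> (s4,v) \<in> R\<^sup>*}"
      proof (rule rt_inv)
        fix x y assume xy: "(x,y) \<in> A" and x: "x \<in> {NewT} \<union> Old ` {v. (s3,v) \<in> R\<^sup>* \<or> (s4,v) \<in> R\<^sup>*}"
        show "y \<in> {NewT} \<union> Old ` {v. (s3,v) \<in> R\<^sup>* \<or> (s4,v) \<in> R\<^sup>*}"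
        proof (cases x)
          case NewT then show ?thesis using xy ft by auto
        next
          case NewS then show ?thesis using x by auto
        next
          case (Old u)
          with x have u: "(s3,u) \<in> R\<^sup>* \<or> (s4,u) \<in> R\<^sup>*" by auto
          show ?thesis
          proof (cases y)
            case NewT then show ?thesis by simp
          next
            case NewS
            then have "u = s1 \<or> u = s2" using dss xy Old by simp
            then show ?thesis using u N d by auto
          next
            case (Old v) then show ?thesis using u ext xy \<open>x = Old u\<close> by blast
          qed
        qed
      qed simp
      thus False by auto
    qed
    ultimately show "\<not> dreach (Gp_vertices V) (Gp_arcs E s1 s2 s3 s4) (Old ` C) NewS NewT
                  \<and> \<not> dreach (Gp_vertices V) (Gp_arcs E s1 s2 s3 s4) (Old ` C) NewT NewS"
      using dr by auto
  next
    assume H: "\<not> dreach (Gp_vertices V) (Gp_arcs E s1 s2 s3 s4) (Old ` C) NewS NewT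
                  \<and> \<not> dreach (Gp_vertices V) (Gp_arcs E s1 s2 s3 s4) (Old ` C) NewT NewS"
    hence H1: "(NewS, NewT) \<notin> A\<^sup>*" "(NewT, NewS) \<notin> A\<^sup>*" using dr by auto
    have P: "\<And>x y. (x,y) \<in> R\<^sup>* \<Longrightarrow> x \<in> {s1,s2,s3,s4} \<Longrightarrow> y \<in> {s1,s2,s3,s4} \<Longrightarrow> x \<noteq> y \<Longrightarrow> False"
    proof -
      fix x y assume xy: "(x,y) \<in> R\<^sup>*" and xm: "x \<in> {s1,s2,s3,s4}" and ym: "y \<in> {s1,s2,s3,s4}" and ne: "x \<noteq> y"
      have "\<And>x y. (x,y) \<in> R\<^sup>* \<Longrightarrow> (x = s1 \<and> y = s2) \<or> (x = s1 \<and> y = s3) \<or> (x = s1 \<and> y = s4)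
         \<or> (x = s2 \<and> y = s3) \<or> (x = s2 \<and> y = s4) \<or> (x = s3 \<and> y = s4) \<Longrightarrow> False"
      proof -
        fix x y assume r: "(x,y) \<in> R\<^sup>*" and c: "(x = s1 \<and> y = s2) \<or> (x = s1 \<and> y = s3) \<or> (x = s1 \<and> y = s4)
         \<or> (x = s2 \<and> y = s3) \<or> (x = s2 \<and> y = s4) \<or> (x = s3 \<and> y = s4)"
        have r': "(y,x) \<in> R\<^sup>*" using S r .
        from c show False
        proof (elim disjE conjE)
          assume "x = s1" "y = s2" with r have "(s1,s2) \<in> R\<^sup>*" by simp from path[OF ar(1) this ar(4)] H1 show False by simp
        next
          assume "x = s1" "y = s3" with r' have "(s3,s1) \<in> R\<^sup>*" by simp from path[OF ar(6) this ar(2)] H1 show False by simp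
        next
          assume "x = s1" "y = s4" with r' have "(s4,s1) \<in> R\<^sup>*" by simp from path[OF ar(7) this ar(2)] H1 show False by simp
        next
          assume "x = s2" "y = s3" with r' have "(s3,s2) \<in> R\<^sup>*" by simp from path[OF ar(5) this ar(4)] H1 show False by simp
        next
          assume "x = s2" "y = s4" with r' have "(s4,s2) \<in> R\<^sup>*" by simp from path[OF ar(7) this ar(3)] H1 show False by simp
        next
          assume "x = s3" "y = s4" with r have "(s3,s4) \<in> R\<^sup>*" by simp from path[OF ar(5) this ar(8)] H1 show False by simp
        qed
      qed
      thus False using xy S xm ym ne by blast
    qed
    show "\<forall>x\<in>{s1, s2, s3, s4}. \<forall>y\<in>{s1, s2, s3, s4}. x \<noteq> y \<longrightarrow> \<not> ucon V E C x y"
      using P ucon_def R_def by (metis ucon_iff)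
  qed
qed

theorem mainTheorem7:
  fixes V :: "'a set" and E :: "('a \<times> 'a) set" and s1 s2 s3 s4 :: 'a and w :: "'a \<Rightarrow> real"
  assumes "finite V" and "E \<subseteq> V \<times> V"
    and "s1 \<in> V" "s2 \<in> V" "s3 \<in> V" "s4 \<in> V"
    and "distinct [s1, s2, s3, s4]"
  shows "(\<forall>C. C \<subseteq> V - {s1, s2, s3, s4} \<longrightarrow>
            ((\<forall>x\<in>{s1, s2, s3, s4}. \<forall>y\<in>{s1, s2, s3, s4}. x \<noteq> y \<longrightarrow> \<not> ucon V E C x y)
             \<longleftrightarrow> (\<not> dreach (Gp_vertices V) (Gp_arcs E s1 s2 s3 s4) (Old ` C) NewS NewT
                  \<and> \<not> dreach (Gp_vertices V) (Gp_arcs E s1 s2 s3 s4) (Old ` C) NewT NewS)))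
       \<and> opt_val w (mwc_feasible V E {s1, s2, s3, s4}) =
         opt_val (Gp_weight w)
           (bicut_feasible (Gp_vertices V) (Gp_arcs E s1 s2 s3 s4)
              ({NewS, NewT} \<union> Old ` {s1, s2, s3, s4}) NewS NewT)"
proof (intro conjI)
  show I: "\<forall>C. C \<subseteq> V - {s1, s2, s3, s4} \<longrightarrow>
            ((\<forall>x\<in>{s1, s2, s3, s4}. \<forall>y\<in>{s1, s2, s3, s4}. x \<noteq> y \<longrightarrow> \<not> ucon V E C x y)
             \<longleftrightarrow> (\<not> dreach (Gp_vertices V) (Gp_arcs E s1 s2 s3 s4) (Old ` C) NewS NewT
                  \<and> \<not> dreach (Gp_vertices V) (Gp_arcs E s1 s2 s3 s4) (Old ` C) NewT NewS))"
    using iff_part[OF assms(2-7)] by blast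
  let ?W = "Gp_vertices V" and ?A = "Gp_arcs E s1 s2 s3 s4" and ?X = "{NewS, NewT} \<union> Old ` {s1, s2, s3, s4}"
  have eqF: "{C. bicut_feasible ?W ?A ?X NewS NewT C} = (image Old) ` {C. mwc_feasible V E {s1, s2, s3, s4} C}"
  proof (rule set_eqI, rule iffI)
    fix D assume "D \<in> {C. bicut_feasible ?W ?A ?X NewS NewT C}"
    hence D: "D \<subseteq> ?W - ?X" "\<not> dreach ?W ?A D NewS NewT" "\<not> dreach ?W ?A D NewT NewS"
      by (auto simp: bicut_feasible_def)
    define C where "C = {v. Old v \<in> D}"
    have DC: "D = Old ` C" using D(1) by (auto simp: C_def Gp_vertices_def)
    have Cs: "C \<subseteq> V - {s1, s2, s3, s4}" using D(1) by (auto simp: C_def Gp_vertices_def)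
    have "mwc_feasible V E {s1, s2, s3, s4} C"
      using I Cs D(2,3) DC unfolding mwc_feasible_def by blast
    thus "D \<in> (image Old) ` {C. mwc_feasible V E {s1, s2, s3, s4} C}" using DC by blast
  next
    fix D assume "D \<in> (image Old) ` {C. mwc_feasible V E {s1, s2, s3, s4} C}"
    then obtain C where DC: "D = Old ` C" and F: "mwc_feasible V E {s1, s2, s3, s4} C" by blast
    have Cs: "C \<subseteq> V - {s1, s2, s3, s4}" using F by (simp add: mwc_feasible_def)
    hence "D \<subseteq> ?W - ?X" using DC by (auto simp: Gp_vertices_def)
    moreover have "\<not> dreach ?W ?A D NewS NewT \<and> \<not> dreach ?W ?A D NewT NewS"
      using I Cs F DC unfolding mwc_feasible_def by blast
    ultimately show "D \<in> {C. bicut_feasible ?W ?A ?X NewS NewT C}" by (simp add: bicut_feasible_def)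
  qed
  have sw: "\<And>C. sum (Gp_weight w) (Old ` C) = sum w C"
    by (simp add: sum.reindex inj_on_def Gp_weight_def)
  have "(\<lambda>C. ereal (sum (Gp_weight w) C)) ` {C. bicut_feasible ?W ?A ?X NewS NewT C}
      = (\<lambda>C. ereal (sum w C)) ` {C. mwc_feasible V E {s1, s2, s3, s4} C}"
    unfolding eqF image_image sw ..
  thus "opt_val w (mwc_feasible V E {s1, s2, s3, s4}) = opt_val (Gp_weight w) (bicut_feasible ?W ?A ?X NewS NewT)"
    unfolding opt_val_def by simp
qed

end
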